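(* In the setting below, for every $a\in A$ the map $f_a:X\to T_a$ is roughly Lipschitz: there are constants $\Lambda>0$, $\sigma\ge0$ such that $|f_a(x)f_a(x')|\le\Lambda|xx'|+\sigma$ for all $x,x'\in X$.
   Context: Setting: $Z$ is a bounded metric space with $\operatorname{diam}Z>0$, $\mu=\pi/\operatorname{diam}Z$, $A$ a set with $|A|=n+1$, and $\delta,\gamma\in(0,1)$, $\lambda\ge1$, $r\in(0,1)$ sufficiently small with $\lambda r<\delta$, $r<\operatorname{diam}Z$. $(\mathcal U_j)_{j\in\mathbb N}$ is a $\gamma$-separated characteristic sequence of open coverings of $Z$, each colored by $A$, $\mathcal U_j=\bigcup_{a\in A}\mathcal U_j^a$, with parameter $r$ and characteristic constants $\delta,\lambda$; that is: each $\mathcal U_j^a$ consists of pairwise disjoint open sets; (1) $\sup_{U\in\mathcal U_j}\operatorname{diam}U\le r^j$ and every ball of radius $\delta r^j$ in $Z$ is contained in some member of $\mathcal U_j$; (2) for every $a,j$ and $z\in Z$ there is $U\in\mathcal U_j^a$ with $\operatorname{dist}(z,U)\le\lambda r^j$; (3) for every $a$ and distinct $U\in\mathcal U_j^a$, $U'\in\mathcal U_{j'}^a$ with $j'\le j$, either $B_s(U)\cap U'=\emptyset$ or $B_s(U)\subset U'$, and if $j'<j$ there is $U''\in\mathcal U_j^a$ with $B_s(U'')\subset U'$, where $s=\gamma r^j$ and $B_s(U)=\{z:\operatorname{dist}(z,U)<s\}$. Trees: put $\mathcal U_0^a=\{Z\}$. $T_a$ is the tree (edges of length $1$, path metric) with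 vertex set $V^a=\bigsqcup_{j\ge0}V_j^a$, where $V_j^a$ is in bijection with $\mathcal U_j^a$ (root $v_a$ corresponds to $Z$); $v\in V_j^a$, $v'\in V_{j'}^a$, $j'<j$, are joined by an edge iff the corresponding sets satisfy $U\subset U'$ and $j'$ is the maximal level $<j$ for which some member of $\mathcal U_{j'}^a$ contains $U$. Cone: $\operatorname{Co}(Z)=Z\times[0,\infty)/Z\times\{0\}$ with vertex $o$ and metric $|xx'|$ for $x=(z,t),x'=(z',t')$ equal to the length of the side $\bar x\bar x'$ of a triangle in $\mathrm H^2$ with sides $t,t'$ from $\bar o$ enclosing angle $\mu|zz'|$. Let $R=\ln(1/r)$, $Z_j=\{(z,jR):z\in Z\}$ for $j\ge1$, $Z_0=\{o\}$, $X=\bigcup_{j\ge0}Z_j$. Define $f_a:X\to T_a$ by $f_a(o)=v_a$ and, for $x=(z,jR)$, $j\ge1$, $f_a(x)$ is the vertex of $V_j^a$ corresponding to a (fixed choice of) member $U\in\mathcal U_j^a$ closest to $z$, i.e. minimizing $\operatorname{dist}(z,U)$. *)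

theory Defs
  imports "HOL-Analysis.Analysis"
begin

definition nbhd :: "'z::metric_space set \<Rightarrow> real \<Rightarrow> 'z set \<Rightarrow> 'z set" where
  "nbhd Z s U = {z \<in> Z. infdist z U < s}"

text \<open>Levels are j = 1, 2, ...;
  Cov j a is the family of members of colour a at level j.\<close>
definition char_seq ::
  "'z::metric_space set \<Rightarrow> 'c set \<Rightarrow> (nat \<Rightarrow> 'c \<Rightarrow> 'z set set) \<Rightarrow> real \<Rightarrow> real \<Rightarrow> real \<Rightarrow> real \<Rightarrow> bool" where
  "char_seq Z A Cov r \<delta> lam \<gamma> \<longleftrightarrow>
     (\<forall>j\<ge>1. \<forall>a\<in>A.
        (\<forall>U\<in>Cov j a. openin (top_of_set Z) U \<and> U \<noteq> {}) \<and> pairwise disjnt (Cov j a)) \<and>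
     (\<forall>j\<ge>1. \<Union>(\<Union>a\<in>A. Cov j a) = Z) \<and>
     (\<forall>j\<ge>1. (\<forall>a\<in>A. \<forall>U\<in>Cov j a. diameter U \<le> r ^ j) \<and>
        (\<forall>z\<in>Z. \<exists>a\<in>A. \<exists>U\<in>Cov j a. ball z (\<delta> * r ^ j) \<inter> Z \<subseteq> U)) \<and>
     (\<forall>a\<in>A. \<forall>j\<ge>1. \<forall>z\<in>Z. \<exists>U\<in>Cov j a. infdist z U \<le> lam * r ^ j) \<and>
     (\<forall>a\<in>A. \<forall>j j'. 1 \<le> j' \<and> j' \<le> j \<longrightarrow>
        (\<forall>U\<in>Cov j a. \<forall>U'\<in>Cov j' a. (j' < j \<or> U \<noteq> U') \<longrightarrow>
            nbhd Z (\<gamma> * r ^ j) U \<inter> U' = {} \<or> nbhd Z (\<gamma> * r ^ j) U \<subseteq> U') \<and>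
        (j' < j \<longrightarrow> (\<forall>U'\<in>Cov j' a. \<exists>U''\<in>Cov j a. nbhd Z (\<gamma> * r ^ j) U'' \<subseteq> U')))"

definition CovE :: "'z set \<Rightarrow> (nat \<Rightarrow> 'c \<Rightarrow> 'z set set) \<Rightarrow> nat \<Rightarrow> 'c \<Rightarrow> 'z set set" where
  "CovE Z Cov j a = (if j = 0 then {Z} else Cov j a)"

definition tree_V :: "'z set \<Rightarrow> (nat \<Rightarrow> 'c \<Rightarrow> 'z set set) \<Rightarrow> 'c \<Rightarrow> (nat \<times> 'z set) set" where
  "tree_V Z Cov a = {(j, U). U \<in> CovE Z Cov j a}"

definition down_edge :: "'z set \<Rightarrow> (nat \<Rightarrow> 'c \<Rightarrow> 'z set set) \<Rightarrow> 'c \<Rightarrow> nat \<times> 'z set \<Rightarrow> nat \<times> 'z set \<Rightarrow> bool" where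
  "down_edge Z Cov a v v' \<longleftrightarrow>
     v \<in> tree_V Z Cov a \<and> v' \<in> tree_V Z Cov a \<and>
     fst v' < fst v \<and> snd v \<subseteq> snd v' \<and>
     (\<forall>k. fst v' < k \<and> k < fst v \<longrightarrow> \<not> (\<exists>W\<in>CovE Z Cov k a. snd v \<subseteq> W))"

definition tree_edge :: "'z set \<Rightarrow> (nat \<Rightarrow> 'c \<Rightarrow> 'z set set) \<Rightarrow> 'c \<Rightarrow> nat \<times> 'z set \<Rightarrow> nat \<times> 'z set \<Rightarrow> bool" where
  "tree_edge Z Cov a v w \<longleftrightarrow> down_edge Z Cov a v w \<or> down_edge Z Cov a w v"

definition graph_dist :: "('v \<Rightarrow> 'v \<Rightarrow> bool) \<Rightarrow> 'v \<Rightarrow> 'v \<Rightarrow> real" where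
  "graph_dist E v w = real (LEAST n. \<exists>p. length p = Suc n \<and> hd p = v \<and> last p = w \<and>
       (\<forall>i<n. E (p ! i) (p ! Suc i)))"

text \<open>Metric of the hyperbolic cone Co(Z): the side opposite to the angle \<mu>|zz'| in a
  triangle of H^2 with sides t, t' (hyperbolic law of cosines).  For t = 0 the value
  does not depend on z, so this is well defined on the quotient by Z \<times> {0}.\<close>
definition cone_dist :: "real \<Rightarrow> 'z::metric_space \<times> real \<Rightarrow> 'z \<times> real \<Rightarrow> real" where
  "cone_dist \<mu> x x' = arcosh (cosh (snd x) * cosh (snd x') -
       sinh (snd x) * sinh (snd x') * cos (\<mu> * dist (fst x) (fst x')))"

text \<open>The map f_a on X: level 0 is the cone vertex o, mapped to the root (0, Z);
  the point (z, jR), j \<ge> 1, is mapped to the vertex (j, F a j z), F being the fixed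
  choice of a closest member.\<close>
definition f_map :: "'z set \<Rightarrow> ('c \<Rightarrow> nat \<Rightarrow> 'z \<Rightarrow> 'z set) \<Rightarrow> 'c \<Rightarrow> nat \<Rightarrow> 'z \<Rightarrow> nat \<times> 'z set" where
  "f_map Z F a j z = (if j = 0 then (0, Z) else (j, F a j z))"

end

theory Submission
  imports Defs
begin


lemma one_minus_cos_ge:
  fixes th :: real
  assumes "0 \<le> th" "th \<le> pi"
  shows "th^2 / 18 \<le> 1 - cos th"
proof -
  define y where "y = th / 2"
  have y0: "0 \<le> y" and y2: "y \<le> 2" using assms pi_less_4 by (auto simp: y_def)
  have "\<bar>sin y - (\<Sum>m<3. sin_coeff m * y ^ m)\<bar> \<le> inverse (fact 3) * \<bar>y\<bar> ^ 3"
    by (rule Maclaurin_sin_bound)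
  moreover have "(\<Sum>m<3. sin_coeff m * y ^ m) = y"
    by (simp add: eval_nat_numeral sin_coeff_def)
  ultimately have "\<bar>sin y - y\<bar> \<le> y^3 / 6" using y0 by (simp add: eval_nat_numeral)
  moreover have "y^3 \<le> 4 * y" using y0 y2
  proof -
    have "y^2 \<le> 4" using y0 y2 by (metis power_mono numeral_Bit0 power2_eq_square numeral_times_numeral num_double mult_2 ) 
    then show ?thesis using y0 by (metis mult_right_mono power2_eq_square power3_eq_cube mult.assoc)
  qed
  ultimately have s: "y / 3 \<le> sin y" by linarith
  have "(y/3)^2 \<le> (sin y)^2" using s y0 by (intro power_mono) auto
  moreover have "cos th = 1 - 2 * (sin y)^2" using cos_double_sin[of y] by (simp add: y_def)
  ultimately show ?thesis by (simp add: y_def power2_eq_square)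
qed

lemma arcosh_ge_ln: "1 \<le> (X::real) \<Longrightarrow> ln X \<le> arcosh X"
proof -
  assume X: "1 \<le> X"
  have "X \<le> X + sqrt (X^2 - 1)" using X by simp
  then have "ln X \<le> ln (X + sqrt (X^2 - 1))" using X by (intro ln_mono) auto
  then show ?thesis using X by (simp add: arcosh_real_def)
qed

lemma cone_X_ge1:
  fixes t t' th :: real
  assumes "0 \<le> t" "0 \<le> t'"
  shows "cosh (t - t') \<le> cosh t * cosh t' - sinh t * sinh t' * cos th"
proof -
  have "sinh t * sinh t' * cos th \<le> sinh t * sinh t'"
    using assms by (intro mult_left_le) (auto)
  then show ?thesis by (simp add: cosh_diff)
qed

lemma cosh_ge_exp_abs: "exp \<bar>x::real\<bar> / 2 \<le> cosh x"
  by (cases "x \<ge> 0") (auto simp: cosh_def)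

lemma cone_lb1:
  fixes t t' th :: real
  assumes "0 \<le> t" "0 \<le> t'"
  shows "\<bar>t - t'\<bar> - ln 2 \<le> arcosh (cosh t * cosh t' - sinh t * sinh t' * cos th)"
proof -
  let ?X = "cosh t * cosh t' - sinh t * sinh t' * cos th"
  have a: "exp \<bar>t - t'\<bar> / 2 \<le> ?X" using cone_X_ge1[OF assms, of th] cosh_ge_exp_abs[of "t-t'"] by linarith
  have b: "1 \<le> ?X" using cone_X_ge1[OF assms, of th] cosh_real_ge_1[of "t-t'"] by linarith
  have "\<bar>t - t'\<bar> - ln 2 = ln (exp \<bar>t - t'\<bar> / 2)" by (simp add: ln_div)
  also have "\<dots> \<le> ln ?X" using a by (intro ln_mono) auto
  also have "\<dots> \<le> arcosh ?X" using b by (rule arcosh_ge_ln)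
  finally show ?thesis .
qed

lemma sinh_ge_quarter: "ln 2 \<le> (t::real) \<Longrightarrow> exp t / 4 \<le> sinh t"
proof -
  assume "ln 2 \<le> t"
  then have "2 \<le> exp t" by (metis exp_ln exp_le_cancel_iff zero_less_numeral)
  then have "exp (-t) \<le> exp t / 2"
  proof -
    assume e: "2 \<le> exp t"
    have "exp (-t) = inverse (exp t)" by (simp add: exp_minus)
    also have "\<dots> \<le> inverse 2" using e by (intro le_imp_inverse_le) auto
    also have "\<dots> \<le> exp t / 2"
    proof -
      have "inverse (2::real) = 1 / 2" by simp
      then show ?thesis using e by linarith
    qed
    finally show ?thesis .
  qed
  then show ?thesis by (simp add: sinh_def)
qed

lemma cone_lb2:
  fixes t t' th :: real
  assumes "ln 2 \<le> t" "ln 2 \<le> t'" "0 < th" "th \<le> pi"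
  shows "t + t' + 2 * ln th - ln 288 \<le> arcosh (cosh t * cosh t' - sinh t * sinh t' * cos th)"
proof -
  let ?X = "cosh t * cosh t' - sinh t * sinh t' * cos th"
  have l2: "0 \<le> ln (2::real)" by simp
  have t0: "0 \<le> t" "0 \<le> t'" using assms l2 by linarith+
  have b: "1 \<le> ?X" using cone_X_ge1[OF t0, of th] cosh_real_ge_1[of "t-t'"] by linarith
  have s1: "exp t / 4 \<le> sinh t" "exp t' / 4 \<le> sinh t'" using assms sinh_ge_quarter by auto
  have cc: "sinh t * sinh t' \<le> cosh t * cosh t'"
    using t0 by (intro mult_mono sinh_le_cosh_real) auto
  have "?X \<ge> sinh t * sinh t' * (1 - cos th)" using cc by (simp add: algebra_simps)
  moreover have "sinh t * sinh t' * (1 - cos th) \<ge> (exp t / 4) * (exp t' / 4) * (th^2/18)"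
    using s1 one_minus_cos_ge[of th] assms t0 by (intro mult_mono) auto
  ultimately have a: "exp (t + t') * th^2 / 288 \<le> ?X" by (simp add: exp_add)
  have "t + t' + 2 * ln th - ln 288 = ln (exp (t + t') * th^2 / 288)"
    using assms by (simp add: ln_div ln_mult ln_realpow)
  also have "\<dots> \<le> ln ?X" using a assms by (intro ln_mono) auto
  also have "\<dots> \<le> arcosh ?X" using b by (rule arcosh_ge_ln)
  finally show ?thesis .
qed



inductive reach :: "('v \<Rightarrow> 'v \<Rightarrow> bool) \<Rightarrow> 'v \<Rightarrow> 'v \<Rightarrow> nat \<Rightarrow> bool" for E where
  reach0: "reach E v v 0"
| reachS: "E v u \<Longrightarrow> reach E u w n \<Longrightarrow> reach E v w (Suc n)"

lemma reach_path:
  "reach E v w n \<Longrightarrow> \<exists>p. length p = Suc n \<and> hd p = v \<and> last p = w \<and> (\<forall>i<n. E (p ! i) (p ! Suc i))"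
proof (induction rule: reach.induct)
  case (reach0 v)
  then show ?case by (intro exI[of _ "[v]"]) auto
next
  case (reachS v u w n)
  then obtain p where p: "length p = Suc n" "hd p = u" "last p = w" "\<forall>i<n. E (p ! i) (p ! Suc i)" by blast
  have "\<forall>i<Suc n. E ((v # p) ! i) ((v # p) ! Suc i)"
  proof (intro allI impI)
    fix i assume "i < Suc n"
    show "E ((v # p) ! i) ((v # p) ! Suc i)"
    proof (cases i)
      case 0
      then show ?thesis using p reachS.hyps(1) by (cases p) auto
    next
      case (Suc i')
      then show ?thesis using p \<open>i < Suc n\<close> by auto
    qed
  qed
  moreover have "last (v # p) = w" using p by (cases p) auto
  ultimately show ?case using p by (intro exI[of _ "v # p"]) auto
qed

lemma graph_dist_le: "reach E v w n \<Longrightarrow> n \<le> N \<Longrightarrow> graph_dist E v w \<le> real N"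
proof -
  assume h: "reach E v w n" "n \<le> N"
  have "(LEAST n. \<exists>p. length p = Suc n \<and> hd p = v \<and> last p = w \<and> (\<forall>i<n. E (p ! i) (p ! Suc i))) \<le> n"
    by (rule Least_le) (rule reach_path[OF h(1)])
  then show ?thesis using h(2) unfolding graph_dist_def by simp
qed

lemma reach_trans: "reach E u v n \<Longrightarrow> reach E v w m \<Longrightarrow> reach E u w (n + m)"
  by (induction rule: reach.induct) (auto intro: reach.intros)

lemma reach_sym:
  assumes sym: "\<And>x y. E x y \<Longrightarrow> E y x"
  shows "reach E v w n \<Longrightarrow> reach E w v n"
proof (induction rule: reach.induct)
  case (reach0 v)
  then show ?case by (rule reach.reach0)
next
  case (reachS v u w n)
  have "reach E u v 1" using sym[OF reachS.hyps(1)] by (auto intro: reach.intros)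
  from reach_trans[OF reachS.IH this] show ?case by simp
qed

lemma tree_edge_sym: "tree_edge Z Cov a x y \<Longrightarrow> tree_edge Z Cov a y x"
  unfolding tree_edge_def by blast

lemma cs_parts:
  assumes cs: "char_seq Z A Cov r \<delta> lam \<gamma>"
  obtains "\<forall>j\<ge>1. \<forall>a\<in>A. (\<forall>U\<in>Cov j a. openin (top_of_set Z) U \<and> U \<noteq> {}) \<and> pairwise disjnt (Cov j a)"
    "\<forall>j\<ge>1. \<Union>(\<Union>a\<in>A. Cov j a) = Z"
    "\<forall>a\<in>A. \<forall>j\<ge>1. \<forall>z\<in>Z. \<exists>U\<in>Cov j a. infdist z U \<le> lam * r ^ j"
    "\<forall>a\<in>A. \<forall>j j'. 1 \<le> j' \<and> j' \<le> j \<longrightarrow>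
        (\<forall>U\<in>Cov j a. \<forall>U'\<in>Cov j' a. (j' < j \<or> U \<noteq> U') \<longrightarrow>
            nbhd Z (\<gamma> * r ^ j) U \<inter> U' = {} \<or> nbhd Z (\<gamma> * r ^ j) U \<subseteq> U') \<and>
        (j' < j \<longrightarrow> (\<forall>U'\<in>Cov j' a. \<exists>U''\<in>Cov j a. nbhd Z (\<gamma> * r ^ j) U'' \<subseteq> U'))"
  using cs unfolding char_seq_def apply (elim conjE) by (rule that)

locale CS =
  fixes Z :: "'z::metric_space set" and A :: "'c set" and Cov :: "nat \<Rightarrow> 'c \<Rightarrow> 'z set set"
    and r \<delta> lam \<gamma> :: real and a :: 'c
  assumes cs: "char_seq Z A Cov r \<delta> lam \<gamma>" and aA: "a \<in> A" and rpos: "0 < r" and rl1: "r < 1"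
    and gpos: "0 < \<gamma>" and Zne: "Z \<noteq> {}"
begin

abbreviation "C j \<equiv> CovE Z Cov j a"
abbreviation "E \<equiv> tree_edge Z Cov a"

lemma P1: "\<forall>j\<ge>1. \<forall>a\<in>A. (\<forall>U\<in>Cov j a. openin (top_of_set Z) U \<and> U \<noteq> {}) \<and> pairwise disjnt (Cov j a)"
  by (rule cs_parts[OF cs]) 
lemma P2: "\<forall>j\<ge>1. \<Union>(\<Union>a\<in>A. Cov j a) = Z"
  by (rule cs_parts[OF cs]) 
lemma P3: "\<forall>a\<in>A. \<forall>j\<ge>1. \<forall>z\<in>Z. \<exists>U\<in>Cov j a. infdist z U \<le> lam * r ^ j"
  by (rule cs_parts[OF cs]) 
lemma P4: "\<forall>a\<in>A. \<forall>j j'. 1 \<le> j' \<and> j' \<le> j \<longrightarrow>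
        (\<forall>U\<in>Cov j a. \<forall>U'\<in>Cov j' a. (j' < j \<or> U \<noteq> U') \<longrightarrow>
            nbhd Z (\<gamma> * r ^ j) U \<inter> U' = {} \<or> nbhd Z (\<gamma> * r ^ j) U \<subseteq> U') \<and>
        (j' < j \<longrightarrow> (\<forall>U'\<in>Cov j' a. \<exists>U''\<in>Cov j a. nbhd Z (\<gamma> * r ^ j) U'' \<subseteq> U'))"
  by (rule cs_parts[OF cs]) 

lemma rsym: "reach E v w n \<Longrightarrow> reach E w v n"
  using reach_sym[where E="tree_edge Z Cov a", OF tree_edge_sym] by blast

lemma cs_ne: "1 \<le> j \<Longrightarrow> U \<in> Cov j a \<Longrightarrow> U \<noteq> {}"
proof -
  assume h: "1 \<le> j" "U \<in> Cov j a"
  have "(\<forall>U\<in>Cov j a. openin (top_of_set Z) U \<and> U \<noteq> {}) \<and> pairwise disjnt (Cov j a)"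
    using P1 h(1) aA by simp
  then show ?thesis using h(2) by simp
qed
lemma cs_disj: "1 \<le> j \<Longrightarrow> pairwise disjnt (Cov j a)"
  using P1 aA by simp
lemma cs_sub: "1 \<le> j \<Longrightarrow> U \<in> Cov j a \<Longrightarrow> U \<subseteq> Z"
proof -
  assume "1 \<le> j" "U \<in> Cov j a"
  then have "\<Union>(\<Union>a\<in>A. Cov j a) = Z" using P2 by simp
  then show ?thesis using \<open>U \<in> Cov j a\<close> aA by blast
qed
lemma cs3: "1 \<le> j' \<Longrightarrow> j' \<le> j \<Longrightarrow> U \<in> Cov j a \<Longrightarrow> U' \<in> Cov j' a \<Longrightarrow> (j' < j \<or> U \<noteq> U') \<Longrightarrow>
   nbhd Z (\<gamma> * r ^ j) U \<inter> U' = {} \<or> nbhd Z (\<gamma> * r ^ j) U \<subseteq> U'"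
proof -
  assume h: "1 \<le> j'" "j' \<le> j" "U \<in> Cov j a" "U' \<in> Cov j' a" "(j' < j \<or> U \<noteq> U')"
  have "\<forall>U\<in>Cov j a. \<forall>U'\<in>Cov j' a. (j' < j \<or> U \<noteq> U') \<longrightarrow>
            nbhd Z (\<gamma> * r ^ j) U \<inter> U' = {} \<or> nbhd Z (\<gamma> * r ^ j) U \<subseteq> U'"
    using P4 aA h(1,2) by simp
  then show ?thesis using h(3,4,5) by blast
qed
lemma cs4: "1 \<le> j \<Longrightarrow> z \<in> Z \<Longrightarrow> \<exists>U\<in>Cov j a. infdist z U \<le> lam * r ^ j"
  using P3 aA by simp

lemma memZ: "U \<in> C j \<Longrightarrow> U \<subseteq> Z"
proof (cases "j = 0")
  case False
  assume "U \<in> C j"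
  then have "U \<in> Cov j a" using False by (simp add: CovE_def)
  moreover have "1 \<le> j" using False by simp
  ultimately show ?thesis using cs_sub by blast
qed (simp add: CovE_def)
lemma memne: "U \<in> C j \<Longrightarrow> U \<noteq> {}"
proof (cases "j = 0")
  case False
  assume "U \<in> C j"
  then have "U \<in> Cov j a" using False by (simp add: CovE_def)
  moreover have "1 \<le> j" using False by simp
  ultimately show ?thesis using cs_ne by blast
qed (use Zne in \<open>simp add: CovE_def\<close>)
lemma same_level: "U \<in> C j \<Longrightarrow> W \<in> C j \<Longrightarrow> U \<inter> W \<noteq> {} \<Longrightarrow> U = W"
proof (cases "j = 0")
  case True
  then show "U \<in> C j \<Longrightarrow> W \<in> C j \<Longrightarrow> U \<inter> W \<noteq> {} \<Longrightarrow> U = W" by (simp add: CovE_def)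
next
  case False
  assume "U \<in> C j" "W \<in> C j" "U \<inter> W \<noteq> {}"
  then have "U \<in> Cov j a" "W \<in> Cov j a" using False by (auto simp: CovE_def)
  moreover have "pairwise disjnt (Cov j a)" using False cs_disj by simp
  ultimately show "U = W" using \<open>U \<inter> W \<noteq> {}\<close> unfolding pairwise_def disjnt_def by blast
qed

lemma sub_nbhd: "U \<in> C j \<Longrightarrow> U \<subseteq> nbhd Z (\<gamma> * r ^ j) U"
  using memZ gpos rpos unfolding nbhd_def by auto

lemma N2: "c \<le> j \<Longrightarrow> (c < j \<or> U \<noteq> W) \<Longrightarrow> U \<in> C j \<Longrightarrow> W \<in> C c \<Longrightarrow>
   x \<in> nbhd Z (\<gamma> * r ^ j) U \<Longrightarrow> x \<in> W \<Longrightarrow> nbhd Z (\<gamma> * r ^ j) U \<subseteq> W"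
proof (cases "c = 0")
  case True
  then show "W \<in> C c \<Longrightarrow> nbhd Z (\<gamma> * r ^ j) U \<subseteq> W" by (auto simp: CovE_def nbhd_def)
next
  case False
  assume h: "c \<le> j" "(c < j \<or> U \<noteq> W)" "U \<in> C j" "W \<in> C c" "x \<in> nbhd Z (\<gamma> * r ^ j) U" "x \<in> W"
  have "U \<in> Cov j a" "W \<in> Cov c a" using h False by (auto simp: CovE_def)
  from cs3[OF _ h(1) this h(2)] False h(5,6) show ?thesis by auto
qed

lemma N1: "c \<le> j \<Longrightarrow> U \<in> C j \<Longrightarrow> W \<in> C c \<Longrightarrow> U \<inter> W \<noteq> {} \<Longrightarrow> U \<subseteq> W"
proof -
  assume h: "c \<le> j" "U \<in> C j" "W \<in> C c" "U \<inter> W \<noteq> {}"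
  show ?thesis
  proof (cases "c = j")
    case True
    then show ?thesis using same_level h by auto
  next
    case False
    then have "c < j" using h by simp
    obtain x where x: "x \<in> U" "x \<in> W" using h by auto
    have "x \<in> nbhd Z (\<gamma> * r ^ j) U" using sub_nbhd[OF h(2)] x by auto
    from N2[OF h(1) _ h(2,3) this x(2)] \<open>c < j\<close> sub_nbhd[OF h(2)] show ?thesis by auto
  qed
qed

lemma parent:
  assumes "U \<in> C j" "0 < j"
  shows "\<exists>p P. p < j \<and> P \<in> C p \<and> U \<subseteq> P \<and> (\<forall>l W. p < l \<longrightarrow> l < j \<longrightarrow> W \<in> C l \<longrightarrow> \<not> U \<subseteq> W)
     \<and> E (j, U) (p, P)"
proof -
  define S where "S = {l. l < j \<and> (\<exists>W\<in>C l. U \<subseteq> W)}"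
  have fin: "finite S" unfolding S_def by auto
  have "0 \<in> S" unfolding S_def using assms memZ[OF assms(1)] by (auto simp: CovE_def)
  then have ne: "S \<noteq> {}" by auto
  define p where "p = Max S"
  have "p \<in> S" unfolding p_def using fin ne by simp
  then obtain P where P: "p < j" "P \<in> C p" "U \<subseteq> P" unfolding S_def by auto
  have mx: "\<forall>l W. p < l \<longrightarrow> l < j \<longrightarrow> W \<in> C l \<longrightarrow> \<not> U \<subseteq> W"
  proof (intro allI impI notI)
    fix l W assume "p < l" "l < j" "W \<in> C l" "U \<subseteq> W"
    then have "l \<in> S" unfolding S_def by auto
    then have "l \<le> p" unfolding p_def using fin by simp
    then show False using \<open>p < l\<close> by simp
  qed
  have "down_edge Z Cov a (j, U) (p, P)"
    unfolding down_edge_def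
  proof (intro conjI)
    show "(j, U) \<in> tree_V Z Cov a" using assms(1) unfolding tree_V_def by simp
    show "(p, P) \<in> tree_V Z Cov a" using P(2) unfolding tree_V_def by simp
    show "\<forall>k. fst (p, P) < k \<and> k < fst (j, U) \<longrightarrow> \<not> (\<exists>W\<in>C k. snd (j, U) \<subseteq> W)"
      using mx by auto
  qed (use P in auto)
  then have "E (j, U) (p, P)" unfolding tree_edge_def by simp
  then show ?thesis using P mx by blast
qed

lemma deepest:
  "U \<in> C j \<Longrightarrow> m \<le> j \<Longrightarrow> \<exists>w W n. w \<le> m \<and> W \<in> C w \<and> U \<subseteq> W \<and>
     (\<forall>l W'. w < l \<longrightarrow> l \<le> m \<longrightarrow> W' \<in> C l \<longrightarrow> \<not> U \<subseteq> W') \<and> n \<le> j - m \<and> reach E (j, U) (w, W) n"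
proof (induction j arbitrary: U rule: less_induct)
  case (less j)
  show ?case
  proof (cases "j = m")
    case True
    then show ?thesis using less.prems by (intro exI[of _ m] exI[of _ U] exI[of _ 0]) (auto intro: reach.intros)
  next
    case False
    then have "0 < j" "m < j" using less.prems by auto
    obtain p P where P: "p < j" "P \<in> C p" "U \<subseteq> P"
      "\<forall>l W. p < l \<longrightarrow> l < j \<longrightarrow> W \<in> C l \<longrightarrow> \<not> U \<subseteq> W" "E (j, U) (p, P)"
      using parent[OF less.prems(1) \<open>0 < j\<close>] by blast
    show ?thesis
    proof (cases "p \<le> m")
      case True
      have "reach E (j, U) (p, P) 1" using P(5) by (auto intro: reach.intros)
      then show ?thesis using P True \<open>m < j\<close>
        by (intro exI[of _ p] exI[of _ P] exI[of _ 1]) auto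
    next
      case False
      obtain w W n where W: "w \<le> m" "W \<in> C w" "P \<subseteq> W"
        "\<forall>l W'. w < l \<longrightarrow> l \<le> m \<longrightarrow> W' \<in> C l \<longrightarrow> \<not> P \<subseteq> W'" "n \<le> p - m" "reach E (p, P) (w, W) n"
        using less.IH[OF P(1) P(2)] False by auto
      have mx: "\<forall>l W'. w < l \<longrightarrow> l \<le> m \<longrightarrow> W' \<in> C l \<longrightarrow> \<not> U \<subseteq> W'"
      proof (intro allI impI notI)
        fix l W' assume h: "w < l" "l \<le> m" "W' \<in> C l" "U \<subseteq> W'"
        have "U \<noteq> {}" using memne less.prems by blast
        then have "P \<inter> W' \<noteq> {}" using h P(3) by blast
        then have "P \<subseteq> W'" using N1[OF _ P(2) h(3)] h False by auto
        then show False using W(4) h by blast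
      qed
      have "reach E (j, U) (w, W) (Suc n)" using P(5) W(6) by (auto intro: reach.intros)
      then show ?thesis using W mx P \<open>m < j\<close> False
        by (intro exI[of _ w] exI[of _ W] exI[of _ "Suc n"]) auto
    qed
  qed
qed

lemma core:
  assumes A0: "A0 \<in> C l" and B: "B \<in> C l'" and UA: "U \<subseteq> A0" and UB: "U' \<subseteq> B"
    and u: "u \<in> U" and u': "u' \<in> U'" and ll: "l' \<le> l" "l \<le> k" "k \<le> j'" and U': "U' \<in> C j'"
    and d: "1 \<le> k \<longrightarrow> dist u u' < \<gamma> * r ^ k"
    and maxB: "\<forall>l2 W'. l' < l2 \<longrightarrow> l2 \<le> k \<longrightarrow> W' \<in> C l2 \<longrightarrow> \<not> U' \<subseteq> W'"
  shows "\<exists>n\<le>1. reach E (l, A0) (l', B) n"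
proof -
  have u'Z: "u' \<in> Z" using memZ[OF U'] u' by auto
  have nb: "1 \<le> l \<Longrightarrow> u' \<in> nbhd Z (\<gamma> * r ^ l) A0"
  proof -
    assume "1 \<le> l"
    then have "dist u u' < \<gamma> * r ^ k" using d ll by auto
    also have "\<dots> \<le> \<gamma> * r ^ l" using ll rpos rl1 gpos by (intro mult_left_mono power_decreasing) auto
    finally have "infdist u' A0 < \<gamma> * r ^ l"
      using infdist_le[of u A0 u'] u UA by (auto simp: dist_commute)
    then show ?thesis using u'Z unfolding nbhd_def by auto
  qed
  have AB: "A0 \<subseteq> B"
  proof (cases "l = 0")
    case True
    then show ?thesis using ll A0 B by (auto simp: CovE_def)
  next
    case False
    show ?thesis
    proof (cases "A0 = B")
      case False
      have "nbhd Z (\<gamma> * r ^ l) A0 \<subseteq> B"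
        using N2[OF ll(1) _ A0 B nb[OF _] _] False \<open>l \<noteq> 0\<close> u' UB by auto
      then show ?thesis using sub_nbhd[OF A0] by auto
    qed simp
  qed
  have Une: "U \<noteq> {}" using u by auto
  have U'ne: "U' \<noteq> {}" using u' by auto
  show ?thesis
  proof (cases "l' = l")
    case True
    then have "A0 = B" using same_level[OF A0] B UA AB Une by blast
    then show ?thesis using True by (intro exI[of _ 0]) (auto intro: reach.intros)
  next
    case False
    then have "l' < l" "0 < l" using ll by auto
    obtain p P where P: "p < l" "P \<in> C p" "A0 \<subseteq> P"
      "\<forall>l2 W. p < l2 \<longrightarrow> l2 < l \<longrightarrow> W \<in> C l2 \<longrightarrow> \<not> A0 \<subseteq> W" "E (l, A0) (p, P)"
      using parent[OF A0 \<open>0 < l\<close>] by blast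
    have "l' \<le> p"
    proof (rule ccontr)
      assume "\<not> l' \<le> p"
      then have "p < l'" by simp
      then have "\<not> A0 \<subseteq> B" using P(4) B \<open>l' < l\<close> by blast
      then show False using AB by simp
    qed
    obtain x where x: "x \<in> A0" using memne[OF A0] by auto
    have "nbhd Z (\<gamma> * r ^ l) A0 \<subseteq> P"
      using N2[OF _ _ A0 P(2), of x] P x sub_nbhd[OF A0] by auto
    then have "u' \<in> P" using nb \<open>0 < l\<close> by auto
    then have "U' \<subseteq> P" using N1[OF _ U' P(2)] u' P(1) ll by auto
    have "\<not> l' < p"
    proof
      assume "l' < p"
      have "p \<le> k" using P(1) ll by simp
      then have "\<not> U' \<subseteq> P" using maxB \<open>l' < p\<close> P(2) by blast
      then show False using \<open>U' \<subseteq> P\<close> by simp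
    qed
    then have "p = l'" using \<open>l' \<le> p\<close> by simp
    then have "P = B" using same_level[OF P(2)] B \<open>U' \<subseteq> P\<close> UB U'ne by blast
    have "reach E (l, A0) (p, P) 1" using P(5) by (auto intro: reach.intros)
    then show ?thesis using \<open>p = l'\<close> \<open>P = B\<close> by auto
  qed
qed

lemma main_tree:
  assumes U: "U \<in> C j" and U': "U' \<in> C j'" and k: "k \<le> j" "k \<le> j'" and u: "u \<in> U" and u': "u' \<in> U'"
    and d: "1 \<le> k \<longrightarrow> dist u u' < \<gamma> * r ^ k"
  shows "\<exists>n. n \<le> j + j' - 2 * k + 1 \<and> reach E (j, U) (j', U') n"
proof -
  have sym: "\<And>x y. E x y \<Longrightarrow> E y x" by (rule tree_edge_sym)
  obtain w W n1 where W: "w \<le> k" "W \<in> C w" "U \<subseteq> W"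
    "\<forall>l W'. w < l \<longrightarrow> l \<le> k \<longrightarrow> W' \<in> C l \<longrightarrow> \<not> U \<subseteq> W'" "n1 \<le> j - k" "reach E (j, U) (w, W) n1"
    using deepest[OF U k(1)] by blast
  obtain w' W' n2 where W': "w' \<le> k" "W' \<in> C w'" "U' \<subseteq> W'"
    "\<forall>l W''. w' < l \<longrightarrow> l \<le> k \<longrightarrow> W'' \<in> C l \<longrightarrow> \<not> U' \<subseteq> W''" "n2 \<le> j' - k" "reach E (j', U') (w', W') n2"
    using deepest[OF U' k(2)] by blast
  have r2: "reach E (w', W') (j', U') n2" using rsym[OF W'(6)] .
  obtain n0 where n0: "n0 \<le> 1" "reach E (w, W) (w', W') n0"
  proof (cases "w' \<le> w")
    case True
    from core[OF W(2) W'(2) W(3) W'(3) u u' True W(1) k(2) U' d W'(4)] that show ?thesis by blast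
  next
    case False
    have d': "1 \<le> k \<longrightarrow> dist u' u < \<gamma> * r ^ k" using d by (simp add: dist_commute)
    from core[OF W'(2) W(2) W'(3) W(3) u' u _ W'(1) k(1) U d' W(4)] False
    obtain n where "n \<le> 1" "reach E (w', W') (w, W) n" by auto
    then show ?thesis using rsym that by blast
  qed
  have "reach E (j, U) (j', U') (n1 + n0 + n2)"
    using reach_trans[OF reach_trans[OF W(6) n0(2)] r2] .
  moreover have "n1 + n0 + n2 \<le> j + j' - 2 * k + 1" using W(5) W'(5) n0(1) k by linarith
  ultimately show ?thesis by blast
qed

end


lemma geo:
  fixes r R D d g M c :: real and j j' k J :: nat
  assumes r: "0 < r" "r \<le> 1/2" and R: "R = ln (1/r)" and J: "J = min j j'" "k \<le> J"
    and D: "0 < D" "d \<le> D" "0 \<le> d" and g: "0 < g" "g \<le> M"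
    and c: "c = arcosh (cosh (real j * R) * cosh (real j' * R) - sinh (real j * R) * sinh (real j' * R) * cos (pi / D * d))"
    and cases: "k = J \<or> (k < J \<and> g * r ^ (k + 1) \<le> M * max d (r ^ J))"
  shows "(real j + real j' - 2 * real k + 1) * R \<le> c + (ln 2 + ln 288 + 2 * \<bar>ln pi\<bar> + 2 * \<bar>ln D\<bar> + 2 * ln (M / g) + 3 * R)"
proof -
  have lnr: "ln r = - R" using R r by (simp add: ln_div)
  have R2: "ln 2 \<le> R"
  proof -
    have "2 \<le> 1 / r" using r by (simp add: field_simps)
    then show ?thesis unfolding R by (intro ln_mono) auto
  qed
  have l2: "0 \<le> ln (2::real)" by simp
  have Rpos: "0 < R" using R2 ln_gt_zero[of 2] by linarith
  have Mg: "0 \<le> ln (M / g)" using g by simp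
  have l288: "0 \<le> ln (288::real)" by simp
  define t where "t = real j * R"
  define t' where "t' = real j' * R"
  have tt: "0 \<le> t" "0 \<le> t'" using Rpos by (auto simp: t_def t'_def)
  have c1: "\<bar>t - t'\<bar> - ln 2 \<le> c" using cone_lb1[OF tt] unfolding c t_def t'_def .
  have absJ: "real j + real j' - 2 * real J = \<bar>real j - real j'\<bar>" using J(1) by auto
  have abst: "\<bar>t - t'\<bar> = \<bar>real j - real j'\<bar> * R" using Rpos
    by (simp add: t_def t'_def abs_mult left_diff_distrib[symmetric])
  show ?thesis
  proof (cases "k = J")
    case True
    have "(real j + real j' - 2 * real k + 1) * R = \<bar>t - t'\<bar> + R" using True absJ abst by (simp add: algebra_simps)
    then show ?thesis using c1 l288 Mg using abs_ge_zero[of "ln pi"] abs_ge_zero[of "ln D"] Rpos by linarith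
  next
    case False
    then have kJ: "k < J" and ineq: "g * r ^ (k + 1) \<le> M * max d (r ^ J)" using cases by auto
    have pos1: "0 < g * r ^ (k + 1)" using g r by simp
    have M0: "0 < M" using g by simp
    show ?thesis
    proof (cases "d \<le> r ^ J")
      case True
      then have "g * r ^ (k + 1) \<le> M * r ^ J" using ineq by simp
      then have "ln (g * r ^ (k + 1)) \<le> ln (M * r ^ J)" using pos1 by (intro ln_mono) auto
      then have "ln g - real (k + 1) * R \<le> ln M - real J * R" using g M0 r lnr by (simp add: ln_mult ln_realpow algebra_simps)
      then have "(real J - real k - 1) * R \<le> ln (M / g)" using g M0 by (simp add: ln_div algebra_simps)
      moreover have "(real j + real j' - 2 * real k + 1) * R = \<bar>t - t'\<bar> + 2 * ((real J - real k - 1) * R) + 3 * R"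
        using absJ abst by (simp add: algebra_simps)
      ultimately show ?thesis using c1 l288 Mg using abs_ge_zero[of "ln pi"] abs_ge_zero[of "ln D"] Rpos by linarith
    next
      case False
      have "0 < r ^ J" using r by simp
      then have dpos: "0 < d" and e: "max d (r ^ J) = d" using False by auto
      have "1 \<le> J" using kJ by simp
      then have j1: "1 \<le> j" "1 \<le> j'" using J(1) by auto
      have tR: "ln 2 \<le> t" "ln 2 \<le> t'" using j1 R2 Rpos unfolding t_def t'_def
        by (metis mult_1 mult_right_mono of_nat_1 of_nat_le_iff order_trans less_imp_le)+
      define th where "th = pi / D * d"
      have th: "0 < th" "th \<le> pi" using D dpos unfolding th_def by (auto simp: field_simps)
      have c2: "t + t' + 2 * ln th - ln 288 \<le> c" using cone_lb2[OF tR th] unfolding c t_def t'_def th_def .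
      have lnth: "ln th = ln pi + ln d - ln D" using D dpos unfolding th_def by (simp add: ln_mult ln_div)
      have "g * r ^ (k + 1) \<le> M * d" using ineq e by simp
      then have "ln (g * r ^ (k + 1)) \<le> ln (M * d)" using pos1 by (intro ln_mono) auto
      then have "ln g - real (k + 1) * R \<le> ln M + ln d" using g M0 r lnr dpos by (simp add: ln_mult ln_realpow algebra_simps)
      then have kR: "- 2 * (real k * R) \<le> 2 * ln (M / g) + 2 * ln d + 2 * R" using g M0 by (simp add: ln_div algebra_simps)
      have "(real j + real j' - 2 * real k + 1) * R = t + t' - 2 * (real k * R) + R"
        by (simp add: t_def t'_def algebra_simps)
      then show ?thesis using c2 kR lnth l2 using abs_ge_self[of "ln D"] abs_ge_self[of "- ln pi"] Rpos by linarith
    qed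
  qed
qed



context CS begin

lemma fpoint:
  assumes z: "z \<in> Z" and Fh: "\<forall>j\<ge>1. \<forall>z\<in>Z. F a j z \<in> Cov j a \<and> (\<forall>U\<in>Cov j a. infdist z (F a j z) \<le> infdist z U)"
    and lam: "0 < lam"
  shows "\<exists>U u. f_map Z F a j z = (j, U) \<and> U \<in> C j \<and> u \<in> U \<and> dist z u \<le> 2 * lam * r ^ j"
proof (cases "j = 0")
  case True
  then show ?thesis using z lam by (intro exI[of _ Z] exI[of _ z]) (auto simp: f_map_def CovE_def)
next
  case False
  then have j1: "1 \<le> j" by simp
  have FU: "F a j z \<in> Cov j a" "\<forall>U\<in>Cov j a. infdist z (F a j z) \<le> infdist z U" using Fh j1 z by auto
  obtain U0 where U0: "U0 \<in> Cov j a" "infdist z U0 \<le> lam * r ^ j" using cs4[OF j1 z] by blast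
  have "infdist z (F a j z) \<le> lam * r ^ j" using FU(2) U0 by force
  also have "\<dots> < 2 * lam * r ^ j" using lam rpos by simp
  finally have lt: "infdist z (F a j z) < 2 * lam * r ^ j" .
  have ne: "F a j z \<noteq> {}" using cs_ne[OF j1 FU(1)] .
  then have "(INF u\<in>F a j z. dist z u) < 2 * lam * r ^ j" using lt by (simp add: infdist_notempty)
  then obtain u where u: "u \<in> F a j z" "dist z u < 2 * lam * r ^ j"
    using cINF_less_iff[OF ne bdd_below_image_dist] by blast
  show ?thesis using u FU(1) False
    by (intro exI[of _ "F a j z"] exI[of _ u]) (auto simp: f_map_def CovE_def)
qed

end

theorem proposition3p4:
  fixes \<delta> \<gamma> lam :: real
  assumes "0 < \<delta>" "\<delta> < 1" "0 < \<gamma>" "\<gamma> < 1" "1 \<le> lam"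
  shows "\<exists>r0>0. \<forall>(Z :: 'z::metric_space set) (A :: 'c set) (n :: nat) r Cov F.
    bounded Z \<and> diameter Z > 0 \<and> finite A \<and> card A = n + 1 \<and>
    0 < r \<and> r < 1 \<and> r < r0 \<and> lam * r < \<delta> \<and> r < diameter Z \<and>
    char_seq Z A Cov r \<delta> lam \<gamma> \<and>
    (\<forall>a\<in>A. \<forall>j\<ge>1. \<forall>z\<in>Z. F a j z \<in> Cov j a \<and>
        (\<forall>U\<in>Cov j a. infdist z (F a j z) \<le> infdist z U))
    \<longrightarrow> (\<forall>a\<in>A. \<exists>Lam>0. \<exists>\<sigma>\<ge>0. \<forall>j j' z z'. z \<in> Z \<and> z' \<in> Z \<longrightarrow>
          graph_dist (tree_edge Z Cov a) (f_map Z F a j z) (f_map Z F a j' z')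
            \<le> Lam * cone_dist (pi / diameter Z) (z, real j * ln (1 / r)) (z', real j' * ln (1 / r)) + \<sigma>)"
proof (rule exI[of _ "1/2"], intro conjI allI impI ballI)
  show "(0::real) < 1/2" by simp
next
  fix Z :: "'z set" and A :: "'c set" and n :: nat and r :: real and Cov and F and a
  assume H: "bounded Z \<and> diameter Z > 0 \<and> finite A \<and> card A = n + 1 \<and>
    0 < r \<and> r < 1 \<and> r < 1/2 \<and> lam * r < \<delta> \<and> r < diameter Z \<and>
    char_seq Z A Cov r \<delta> lam \<gamma> \<and>
    (\<forall>a\<in>A. \<forall>j\<ge>1. \<forall>z\<in>Z. F a j z \<in> Cov j a \<and>
        (\<forall>U\<in>Cov j a. infdist z (F a j z) \<le> infdist z U))"
    and aA: "a \<in> A"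
  have bZ: "bounded Z" using H by (elim conjE) assumption
  have dZ: "diameter Z > 0" using H by (elim conjE) assumption
  have r0: "0 < r" using H by (elim conjE) assumption
  have r1: "r < 1" using H by (elim conjE) assumption
  have r2: "r < 1/2" using H by (elim conjE) assumption
  have cs: "char_seq Z A Cov r \<delta> lam \<gamma>" using H by (elim conjE) assumption
  have FH: "\<forall>a\<in>A. \<forall>j\<ge>1. \<forall>z\<in>Z. F a j z \<in> Cov j a \<and> (\<forall>U\<in>Cov j a. infdist z (F a j z) \<le> infdist z U)"
    using H by (elim conjE) assumption
  have Fh: "\<forall>j\<ge>1. \<forall>z\<in>Z. F a j z \<in> Cov j a \<and> (\<forall>U\<in>Cov j a. infdist z (F a j z) \<le> infdist z U)"
    using FH aA by (rule bspec)
  have Zne: "Z \<noteq> {}" using dZ by auto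
  interpret CS Z A Cov r \<delta> lam \<gamma> a
    using cs aA r0 r1 assms(3) Zne by unfold_locales auto
  define R where "R = ln (1 / r)"
  define D where "D = diameter Z"
  define M where "M = 4 * lam + 1"
  define S0 where "S0 = ln 2 + ln 288 + 2 * \<bar>ln pi\<bar> + 2 * \<bar>ln D\<bar> + 2 * ln (M / \<gamma>) + 3 * R"
  have Rpos: "0 < R" unfolding R_def using r0 r1 by simp
  have gM: "\<gamma> \<le> M" using assms unfolding M_def by simp
  have S0pos: "0 \<le> S0" unfolding S0_def using Rpos gM assms(3) by (simp add: add_nonneg_nonneg)
  have lam0: "0 < lam" using assms by simp
  have L0: "0 < 1 / R" using Rpos by simp
  have S00: "0 \<le> S0 / R" using Rpos S0pos by simp
  have main: "\<forall>j j' z z'. z \<in> Z \<and> z' \<in> Z \<longrightarrow>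
          graph_dist (tree_edge Z Cov a) (f_map Z F a j z) (f_map Z F a j' z')
            \<le> 1 / R * cone_dist (pi / diameter Z) (z, real j * ln (1 / r)) (z', real j' * ln (1 / r)) + S0 / R"
  proof (intro allI impI)
    fix j j' z z'
    assume zz: "z \<in> Z \<and> z' \<in> Z"
    obtain U u where U: "f_map Z F a j z = (j, U)" "U \<in> C j" "u \<in> U" "dist z u \<le> 2 * lam * r ^ j"
      using fpoint[of z F j, OF _ Fh lam0] zz by blast
    obtain U' u' where U': "f_map Z F a j' z' = (j', U')" "U' \<in> C j'" "u' \<in> U'" "dist z' u' \<le> 2 * lam * r ^ j'"
      using fpoint[of z' F j', OF _ Fh lam0] zz by blast
    define J where "J = min j j'"
    define d where "d = dist z z'"
    define e where "e = max d (r ^ J)"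
    define S where "S = {k. k \<le> J \<and> (k = 0 \<or> M * e < \<gamma> * r ^ k)}"
    define k where "k = Max S"
    have finS: "finite S" unfolding S_def by auto
    have "0 \<in> S" unfolding S_def by simp
    then have Sne: "S \<noteq> {}" by auto
    have kS: "k \<in> S" unfolding k_def using finS Sne by (rule Max_in)
    have kmax: "\<And>k'. k' \<in> S \<Longrightarrow> k' \<le> k" unfolding k_def using finS by simp
    have kJ: "k \<le> J" using kS unfolding S_def by simp
    have rjJ: "r ^ j \<le> r ^ J" "r ^ j' \<le> r ^ J" unfolding J_def using r0 r1 by (auto intro: power_decreasing)
    have "dist u u' \<le> dist u z + dist z z' + dist z' u'" 
      using dist_triangle[of u u' z] dist_triangle[of z u' z'] by linarith
    also have "\<dots> \<le> 2 * lam * r ^ j + d + 2 * lam * r ^ j'" using U(4) U'(4) by (simp add: d_def dist_commute)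
    also have "\<dots> \<le> 2 * lam * r ^ J + d + 2 * lam * r ^ J" using rjJ lam0 by (intro add_mono) auto
    also have "\<dots> \<le> M * e" unfolding M_def e_def using lam0 r0
      by (simp add: algebra_simps) (smt (verit) max.cobounded1 max.cobounded2 mult_left_mono)
    finally have duu: "dist u u' \<le> M * e" .
    have dcond: "1 \<le> k \<longrightarrow> dist u u' < \<gamma> * r ^ k" using kS duu unfolding S_def by auto
    obtain N where N: "N \<le> j + j' - 2 * k + 1" "reach E (j, U) (j', U') N"
      using main_tree[OF U(2) U'(2) _ _ U(3) U'(3) dcond] kJ unfolding J_def by auto
    have gd: "graph_dist E (f_map Z F a j z) (f_map Z F a j' z') \<le> real (j + j' - 2 * k + 1)"
      using graph_dist_le[OF N(2) N(1)] U(1) U'(1) by simp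
    have rN: "real (j + j' - 2 * k + 1) = real j + real j' - 2 * real k + 1"
      using kJ unfolding J_def by (simp add: of_nat_diff)
    have cases: "k = J \<or> (k < J \<and> \<gamma> * r ^ (k + 1) \<le> M * max d (r ^ J))"
    proof (cases "k = J")
      case False
      then have "k < J" using kJ by simp
      have "k + 1 \<notin> S" using kmax by fastforce
      then have "\<not> M * e < \<gamma> * r ^ (k + 1)" using \<open>k < J\<close> unfolding S_def by auto
      then show ?thesis using \<open>k < J\<close> unfolding e_def by simp
    qed simp
    define c where "c = arcosh (cosh (real j * R) * cosh (real j' * R) - sinh (real j * R) * sinh (real j' * R) * cos (pi / D * d))"
    have dD: "d \<le> D" "0 \<le> d" unfolding d_def D_def using zz bZ diameter_bounded_bound by auto
    have geo': "(real j + real j' - 2 * real k + 1) * R \<le> c + S0"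
      using geo[OF r0 _ R_def J_def kJ _ dD _ gM c_def cases] r2 dZ assms(3) unfolding D_def S0_def by simp
    have cd: "cone_dist (pi / diameter Z) (z, real j * ln (1 / r)) (z', real j' * ln (1 / r)) = c"
      unfolding cone_dist_def c_def R_def D_def d_def by simp
    have "real (j + j' - 2 * k + 1) \<le> 1 / R * c + S0 / R"
      using geo' rN Rpos by (simp add: field_simps)
    then show "graph_dist (tree_edge Z Cov a) (f_map Z F a j z) (f_map Z F a j' z')
            \<le> 1 / R * cone_dist (pi / diameter Z) (z, real j * ln (1 / r)) (z', real j' * ln (1 / r)) + S0 / R"
      using gd cd by simp
  qed
  show "\<exists>Lam>0. \<exists>\<sigma>\<ge>0. \<forall>j j' z z'. z \<in> Z \<and> z' \<in> Z \<longrightarrow>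
          graph_dist (tree_edge Z Cov a) (f_map Z F a j z) (f_map Z F a j' z')
            \<le> Lam * cone_dist (pi / diameter Z) (z, real j * ln (1 / r)) (z', real j' * ln (1 / r)) + \<sigma>"
    using L0 S00 main by blast
qed

end
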